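(* Assume $\Omega_{\mathrm O},\Omega_{\mathrm I}$ satisfy the standing assumptions (1)–(5). For every $\psi\in\boldsymbol A_\Omega$ with $\langle\psi\rangle_{[0,1]}\notin\operatorname{int}\operatorname{conv}\Omega_{\mathrm I}$ there exists $t\in(0,1)$ such that, with $I_+=[0,t]$ and $I_-=[t,1]$, $$\big[\langle\psi\rangle_{I_+},\langle\psi\rangle_{I_-}\big]\subset\operatorname{cl}\Omega_{\mathrm O}\setminus\operatorname{int}\operatorname{conv}\Omega_{\mathrm I}.$$
   Context: Let $d\ge1$. $\Omega_{\mathrm O}\subset\mathbb R^d$ is a nonempty open strictly convex set and $\Omega_{\mathrm I}\subset\Omega_{\mathrm O}$ is a closed set; $\operatorname{conv}$, $\operatorname{int}$, $\operatorname{cl}$, $\partial$ denote convex hull, interior, closure, boundary. A ray is a set $\{x+te: t\ge0\}$ with $e\ne0$. The standing assumptions are: (1) $\partial\operatorname{conv}\Omega_{\mathrm I}$ contains no rays; (2) $\operatorname{cl}\operatorname{conv}\Omega_{\mathrm I}\subset\Omega_{\mathrm O}$; (3) $\operatorname{int}\operatorname{conv}\Omega_{\mathrm I}\ne\varnothing$ and $\Omega_{\mathrm O}$ and $\operatorname{conv}\Omega_{\mathrm I}$ have congruent maximal inscribed cones (the set of directions $e$ such that some ray $\{x+te:t\ge0\}$ is contained in the set is the same for both sets); (4) the set $(\operatorname{int}\operatorname{conv}\Omega_{\mathrm I})\setminus\Omega_{\mathrm I}$ is a locally finite union of its connected components $\omega_j$ (every bounded subset of $\mathbb R^d$ meets only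 finitely many $\omega_j$); (5) for every $j$ there is a supporting hyperplane $L_j$ to $\operatorname{conv}\Omega_{\mathrm I}$ that contains $E_j:=\partial\omega_j\setminus\Omega_{\mathrm I}$. Set $\Omega=\operatorname{cl}\Omega_{\mathrm O}\setminus\Omega_{\mathrm I}$. For a set $E$ of positive finite measure, $\langle\psi\rangle_E=|E|^{-1}\int_E\psi$ (coordinate-wise). $\boldsymbol{A}_\Omega=\{\psi\in L_1([0,1],\mathbb R^d): \psi(x)\in\partial\Omega_{\mathrm O}\ \forall x\in[0,1],\ \langle\psi\rangle_J\notin\Omega_{\mathrm I}\text{ for every subinterval }J\subset[0,1]\}$. $[P,Q]$ denotes the closed segment joining $P$ and $Q$. *)

theory Defs
  imports "HOL-Analysis.Analysis"
begin

definition strictly_convex :: "'a::euclidean_space set \<Rightarrow> bool" where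
  "strictly_convex S \<longleftrightarrow> convex S \<and>
     (\<forall>x\<in>closure S. \<forall>y\<in>closure S. x \<noteq> y \<longrightarrow> open_segment x y \<subseteq> interior S)"

definition ray :: "'a::euclidean_space \<Rightarrow> 'a \<Rightarrow> 'a set" where
  "ray x e = {x + t *\<^sub>R e | t. t \<ge> 0}"

definition ray_dirs :: "'a::euclidean_space set \<Rightarrow> 'a set" where
  "ray_dirs S = {e. e \<noteq> 0 \<and> (\<exists>x. ray x e \<subseteq> S)}"

definition supporting_hyperplane :: "'a::euclidean_space set \<Rightarrow> 'a set \<Rightarrow> bool" where
  "supporting_hyperplane C L \<longleftrightarrow>
     (\<exists>a b. a \<noteq> 0 \<and> L = {x. a \<bullet> x = b} \<and> (\<forall>y\<in>C. a \<bullet> y \<le> b)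
            \<and> (\<exists>x\<in>closure C. a \<bullet> x = b))"

definition avg :: "real set \<Rightarrow> (real \<Rightarrow> 'a::euclidean_space) \<Rightarrow> 'a" where
  "avg E \<psi> = (1 / measure lebesgue E) *\<^sub>R integral E \<psi>"

definition standing_assumptions :: "'a::euclidean_space set \<Rightarrow> 'a set \<Rightarrow> bool" where
  "standing_assumptions \<Omega>O \<Omega>I \<longleftrightarrow>
     \<Omega>O \<noteq> {} \<and> open \<Omega>O \<and> strictly_convex \<Omega>O \<and> closed \<Omega>I \<and> \<Omega>I \<subseteq> \<Omega>O \<and>
     \<comment> \<open>(1)\<close>
     (\<forall>x e. e \<noteq> 0 \<longrightarrow> \<not> ray x e \<subseteq> frontier (convex hull \<Omega>I)) \<and>
     \<comment> \<open>(2)\<close>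
     closure (convex hull \<Omega>I) \<subseteq> \<Omega>O \<and>
     \<comment> \<open>(3)\<close>
     interior (convex hull \<Omega>I) \<noteq> {} \<and> ray_dirs \<Omega>O = ray_dirs (convex hull \<Omega>I) \<and>
     \<comment> \<open>(4)\<close>
     (\<forall>B. bounded B \<longrightarrow>
        finite {\<omega> \<in> components (interior (convex hull \<Omega>I) - \<Omega>I). \<omega> \<inter> B \<noteq> {}}) \<and>
     \<comment> \<open>(5)\<close>
     (\<forall>\<omega> \<in> components (interior (convex hull \<Omega>I) - \<Omega>I).
        \<exists>L. supporting_hyperplane (convex hull \<Omega>I) L \<and> frontier \<omega> - \<Omega>I \<subseteq> L)"

definition A_class :: "'a::euclidean_space set \<Rightarrow> 'a set \<Rightarrow> (real \<Rightarrow> 'a) set" where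
  "A_class \<Omega>O \<Omega>I = {\<psi>. \<psi> absolutely_integrable_on {0..1} \<and>
      (\<forall>x\<in>{0..1}. \<psi> x \<in> frontier \<Omega>O) \<and>
      (\<forall>a b. 0 \<le> a \<and> a < b \<and> b \<le> 1 \<longrightarrow> avg {a..b} \<psi> \<notin> \<Omega>I)}"

end

theory Submission
  imports Defs
begin

lemma real_Inf_in: fixes S :: "real set" assumes "closed S" "S \<noteq> {}" "S \<subseteq> {0..1}" shows "Inf S \<in> S"
  by (meson assms bdd_below_Icc bdd_below_mono closed_contains_Inf)
lemma real_Sup_in: fixes S :: "real set" assumes "closed S" "S \<noteq> {}" "S \<subseteq> {0..1}" shows "Sup S \<in> S"
  by (meson assms bdd_above_Icc bdd_above_mono closed_contains_Sup)
lemma real_Inf_le: fixes S :: "real set" assumes "x \<in> S" "S \<subseteq> {0..1}" shows "Inf S \<le> x"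
  by (meson assms bdd_below_Icc bdd_below_mono cInf_lower)
lemma real_Sup_ge: fixes S :: "real set" assumes "x \<in> S" "S \<subseteq> {0..1}" shows "x \<le> Sup S"
  by (meson assms bdd_above_Icc bdd_above_mono cSup_upper)

definition cellP :: "real set \<Rightarrow> nat \<Rightarrow> nat \<Rightarrow> real set" where
  "cellP A n j = (if A \<inter> {real j / real n .. real (Suc j) / real n} = {} then {}
     else {Inf (A \<inter> {real j / real n..}) .. Sup (A \<inter> {real j / real n .. real (Suc j) / real n})})"

lemma cellP_props:
  assumes A: "closed A" "A \<subseteq> {0..1}" and ne: "A \<inter> {real j / real n .. real (Suc j) / real n} \<noteq> {}"
  shows "cellP A n j = {Inf (A \<inter> {real j / real n..}) .. Sup (A \<inter> {real j / real n .. real (Suc j) / real n})}"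
    "Inf (A \<inter> {real j / real n..}) \<in> A" "Sup (A \<inter> {real j / real n .. real (Suc j) / real n}) \<in> A"
    "real j / real n \<le> Inf (A \<inter> {real j / real n..})"
    "Inf (A \<inter> {real j / real n..}) \<le> Sup (A \<inter> {real j / real n .. real (Suc j) / real n})"
    "Sup (A \<inter> {real j / real n .. real (Suc j) / real n}) \<le> real (Suc j) / real n"
proof -
  let ?c = "{real j / real n .. real (Suc j) / real n}"
  let ?d = "{real j / real n..}"
  have s: "Sup (A \<inter> ?c) \<in> A \<inter> ?c"
    by (rule real_Sup_in) (use A ne in auto)
  have i: "Inf (A \<inter> ?d) \<in> A \<inter> ?d"
    by (rule real_Inf_in) (use A ne in auto)
  have "Inf (A \<inter> ?d) \<le> Sup (A \<inter> ?c)"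
    by (rule real_Inf_le) (use A s in auto)
  then show "cellP A n j = {Inf (A \<inter> ?d) .. Sup (A \<inter> ?c)}" "Inf (A \<inter> ?d) \<in> A" "Sup (A \<inter> ?c) \<in> A"
    "real j / real n \<le> Inf (A \<inter> ?d)" "Inf (A \<inter> ?d) \<le> Sup (A \<inter> ?c)" "Sup (A \<inter> ?c) \<le> real (Suc j) / real n"
    using s i ne by (auto simp: cellP_def)
qed


lemma cellP_sub:
  assumes A: "closed A" "A \<subseteq> {0..1}"
  shows "cellP A n j \<subseteq> {real j / real n .. real (Suc j) / real n}"
proof (cases "A \<inter> {real j / real n .. real (Suc j) / real n} = {}")
  case True then show ?thesis by (simp add: cellP_def)
next
  case False
  from cellP_props[OF A False] show ?thesis by auto
qed

lemma irrat_floor: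
  fixes y :: real assumes "y \<notin> \<rat>" shows "of_int \<lfloor>y\<rfloor> < y" "y < of_int \<lfloor>y\<rfloor> + 1"
proof -
  have "of_int \<lfloor>y\<rfloor> \<noteq> y" using assms by (metis Rats_of_int)
  then show "of_int \<lfloor>y\<rfloor> < y" by (simp add: order_less_le)
  show "y < of_int \<lfloor>y\<rfloor> + 1" by linarith
qed

lemma mult_irrat: fixes x :: real assumes "x \<notin> \<rat>" "n > 0" shows "real n * x \<notin> \<rat>"
proof
  assume "real n * x \<in> \<rat>"
  moreover have "x = (real n * x) / real n" using assms(2) by simp
  ultimately have "x \<in> \<rat>" by (metis Rats_divide Rats_of_nat)
  then show False using assms by simp
qed

lemma cell_unique:
  fixes x :: real
  assumes x: "x \<notin> \<rat>" "x \<in> {0..1}" and n: "n > 0"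
    and j: "x \<in> {real j / real n .. real (Suc j) / real n}"
  shows "j = nat \<lfloor>real n * x\<rfloor>"
proof -
  have nx: "real n * x \<notin> \<rat>" using mult_irrat x n by blast
  have "real j \<le> real n * x" "real n * x \<le> real (Suc j)"
    using j n by (auto simp: field_simps)
  moreover have "real j \<noteq> real n * x" "real n * x \<noteq> real (Suc j)"
    using nx by (metis Rats_of_nat)+
  ultimately have "real j < real n * x" "real n * x < real j + 1" by auto
  then have "\<lfloor>real n * x\<rfloor> = int j" by (simp add: floor_eq_iff)
  then show ?thesis by simp
qed

lemma cell_own:
  fixes x :: real
  assumes x: "x \<notin> \<rat>" "x \<in> {0..1}" and n: "n > 0"
  defines "J \<equiv> nat \<lfloor>real n * x\<rfloor>"
  shows "x \<in> {real J / real n .. real (Suc J) / real n}" "J < n"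
proof -
  have nx: "real n * x \<notin> \<rat>" using mult_irrat x n by blast
  have x1: "x \<noteq> 1" using x by auto
  have fl0: "0 \<le> \<lfloor>real n * x\<rfloor>" using x by auto
  have rJ: "real J = of_int \<lfloor>real n * x\<rfloor>" using fl0 J_def by simp
  have a: "real J < real n * x" "real n * x < real J + 1" using irrat_floor[OF nx] rJ by auto
  then show "x \<in> {real J / real n .. real (Suc J) / real n}"
    using n by (auto simp: field_simps)
  have "real n * x \<le> real n" using x n by auto
  moreover have "real n * x \<noteq> real n" using nx by (metis Rats_of_nat)
  ultimately have "real J < real n" using a by linarith
  then show "J < n" by simp
qed

lemma cellP_sum_point:
  fixes x :: real
  assumes A: "closed A" "A \<subseteq> {0..1}" and x: "x \<notin> \<rat>" "x \<in> {0..1}" and n: "n > 0"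
  shows "(\<Sum>j<n. indicator (cellP A n j) x) = (indicator (cellP A n (nat \<lfloor>real n * x\<rfloor>)) x :: real)"
proof -
  let ?J = "nat \<lfloor>real n * x\<rfloor>"
  have J: "?J < n" using cell_own[OF x n] by auto
  have z: "indicator (cellP A n j) x = (0::real)" if "j < n" "j \<noteq> ?J" for j
  proof -
    have "x \<notin> cellP A n j"
    proof
      assume "x \<in> cellP A n j"
      then have "x \<in> {real j / real n .. real (Suc j) / real n}" using cellP_sub[OF A] by blast
      then show False using cell_unique[OF x n] that by blast
    qed
    then show ?thesis by simp
  qed
  have "(\<Sum>j<n. indicator (cellP A n j) x) = indicator (cellP A n ?J) x + (\<Sum>j\<in>{..<n} - {?J}. indicator (cellP A n j) x)"
    using J by (subst sum.remove[of _ ?J]) auto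
  also have "(\<Sum>j\<in>{..<n} - {?J}. indicator (cellP A n j) x) = (0::real)"
    by (rule sum.neutral) (use z in auto)
  finally show ?thesis by simp
qed

lemma cellP_in: 
  fixes x :: real
  assumes A: "closed A" "A \<subseteq> {0..1}" and x: "x \<notin> \<rat>" "x \<in> A" and n: "n > 0"
  shows "x \<in> cellP A n (nat \<lfloor>real n * x\<rfloor>)"
proof -
  let ?J = "nat \<lfloor>real n * x\<rfloor>"
  have x01: "x \<in> {0..1}" using x A by auto
  have c: "x \<in> {real ?J / real n .. real (Suc ?J) / real n}" using cell_own[OF x(1) x01 n] by auto
  then have ne: "A \<inter> {real ?J / real n .. real (Suc ?J) / real n} \<noteq> {}" using x by blast
  have "Inf (A \<inter> {real ?J / real n..}) \<le> x" by (rule real_Inf_le) (use c x A in auto)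
  moreover have "x \<le> Sup (A \<inter> {real ?J / real n .. real (Suc ?J) / real n})"
    by (rule real_Sup_ge) (use c x A in auto)
  ultimately show ?thesis using cellP_props(1)[OF A ne] by auto
qed

lemma cellP_near:
  fixes x :: real
  assumes A: "closed A" "A \<subseteq> {0..1}" and xin: "x \<in> cellP A n j"
  shows "\<exists>a\<in>A. dist x a \<le> 1 / real n"
proof -
  have ne: "A \<inter> {real j / real n .. real (Suc j) / real n} \<noteq> {}"
    using xin by (auto simp: cellP_def split: if_splits)
  note p = cellP_props[OF A ne]
  let ?a = "Inf (A \<inter> {real j / real n..})"
  have "?a \<le> x" "x \<le> real (Suc j) / real n" "real j / real n \<le> ?a" using p xin by auto
  then have "dist x ?a \<le> real (Suc j) / real n - real j / real n" by (simp add: dist_real_def)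
  also have "\<dots> = 1 / real n" by (simp add: diff_divide_distrib[symmetric])
  finally show ?thesis using p(2) by blast
qed

lemma negligible_Rats: "negligible (\<rat> :: real set)"
proof -
  have "negligible (\<Union>x\<in>\<rat>. {x::real})"
    by (intro negligible_countable_Union) (auto simp: countable_rat)
  then show ?thesis by simp
qed

lemma cellP_interval: "\<exists>a b. cellP A n j = {a..b}"
proof (cases "A \<inter> {real j / real n .. real (Suc j) / real n} = {}")
  case True
  then have "cellP A n j = {1..0::real}" by (simp add: cellP_def)
  then show ?thesis by blast
next
  case False
  then show ?thesis by (metis cellP_def)
qed

lemma cellP_sub01:
  assumes A: "closed A" "A \<subseteq> {0..1}" and j: "j < n"
  shows "cellP A n j \<subseteq> {0..1}"
proof -
  have "real (Suc j) / real n \<le> 1" using j by (simp add: divide_le_eq_1)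
  moreover have "0 \<le> real j / real n" by simp
  ultimately have "{real j / real n .. real (Suc j) / real n} \<subseteq> {0..1}" by auto
  then show ?thesis using cellP_sub[OF A, of n j] by blast
qed

lemma pieces_limit:
  fixes f :: "real \<Rightarrow> real" and A :: "real set"
  assumes f: "f absolutely_integrable_on {0..1}" and A: "closed A" "A \<subseteq> {0..1}"
  shows "(\<lambda>n. \<Sum>j<n. integral (cellP A n j) f) \<longlonglongrightarrow> integral A f" "f integrable_on A"
proof -
  have fi: "f integrable_on {0..1}" and fa: "(\<lambda>x. norm (f x)) integrable_on {0..1}"
    using f by (auto simp: absolutely_integrable_on_def)
  have nQ: "negligible (\<rat> :: real set)" by (rule negligible_Rats)
  have Pint: "(\<lambda>x. indicator (cellP A n j) x * f x) integrable_on {0..1}"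
    and Pval: "integral {0..1} (\<lambda>x. indicator (cellP A n j) x * f x) = integral (cellP A n j) f"
    if j: "j < n" for n j
  proof -
    have sub: "cellP A n j \<subseteq> {0..1}" by (rule cellP_sub01[OF A j])
    obtain a b where ab: "cellP A n j = {a..b}" using cellP_interval by blast
    have eq: "(\<lambda>x. indicator (cellP A n j) x * f x) = (\<lambda>x. if x \<in> cellP A n j then f x else 0)"
      by (auto simp: indicator_def)
    have "f integrable_on cellP A n j"
    proof (cases "a \<le> b")
      case True
      then show ?thesis using ab sub by (auto intro: integrable_subinterval_real[OF fi])
    next
      case False
      then show ?thesis using ab by (simp add: integrable_on_empty)
    qed
    then have "f integrable_on (cellP A n j \<inter> {0..1})" using sub by (simp add: Int_absorb2)
    then show "(\<lambda>x. indicator (cellP A n j) x * f x) integrable_on {0..1}"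
      unfolding eq by (simp add: integrable_restrict_Int)
    show "integral {0..1} (\<lambda>x. indicator (cellP A n j) x * f x) = integral (cellP A n j) f"
      unfolding eq integral_restrict_Int using sub by (simp add: Int_absorb2)
  qed
  define g where "g n x = (if x \<in> \<rat> then 0 else (\<Sum>j<n. indicator (cellP A n j) x) * f x)" for n x
  define g0 where "g0 x = (if x \<in> \<rat> then 0 else indicator A x * f x)" for x
  have gsum: "(\<lambda>x. (\<Sum>j<n. indicator (cellP A n j) x) * f x) = (\<lambda>x. \<Sum>j<n. indicator (cellP A n j) x * f x)" for n
    by (simp add: sum_distrib_right)
  have int_g: "g n integrable_on {0..1}" for n
  proof -
    have "(\<lambda>x. \<Sum>j<n. indicator (cellP A n j) x * f x) integrable_on {0..1}"
      by (rule integrable_sum) (auto intro: Pint)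
    then show ?thesis
    proof (rule integrable_spike[OF _ nQ])
      fix x :: real assume "x \<in> {0..1} - \<rat>"
      then have xQ: "x \<notin> \<rat>" by simp
      show "g n x = (\<Sum>j<n. indicator (cellP A n j) x * f x)"
        by (simp only: g_def sum_distrib_right if_not_P[OF xQ])
    qed
  qed
  have val_g: "integral {0..1} (g n) = (\<Sum>j<n. integral (cellP A n j) f)" for n
  proof -
    have "integral {0..1} (g n) = integral {0..1} (\<lambda>x. \<Sum>j<n. indicator (cellP A n j) x * f x)"
    proof (rule integral_spike[OF nQ, symmetric])
      fix x :: real assume "x \<in> {0..1} - \<rat>"
      then have xQ: "x \<notin> \<rat>" by simp
      show "g n x = (\<Sum>j<n. indicator (cellP A n j) x * f x)"
        by (simp only: g_def sum_distrib_right if_not_P[OF xQ])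
    qed
    also have "\<dots> = (\<Sum>j<n. integral {0..1} (\<lambda>x. indicator (cellP A n j) x * f x))"
      by (rule Henstock_Kurzweil_Integration.integral_sum) (auto intro: Pint)
    also have "\<dots> = (\<Sum>j<n. integral (cellP A n j) f)"
      by (rule sum.cong) (auto simp: Pval)
    finally show ?thesis .
  qed
  have eqA: "(\<lambda>x. indicator A x * f x) = (\<lambda>x. if x \<in> A then f x else 0)"
    by (auto simp: indicator_def)
  have val_g0: "integral {0..1} g0 = integral A f"
  proof -
    have "integral {0..1} g0 = integral {0..1} (\<lambda>x. if x \<in> A then f x else 0)"
      by (rule integral_spike[OF nQ, symmetric]) (auto simp: g0_def indicator_def)
    also have "\<dots> = integral A f" unfolding integral_restrict_Int using A by (simp add: Int_absorb2)
    finally show ?thesis .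
  qed
  have sumpt: "(\<Sum>j<n. indicator (cellP A n j) x) \<in> {0, 1::real}"
    if x: "x \<notin> \<rat>" "x \<in> {0..1}" for n x
  proof (cases "n = 0")
    case True then show ?thesis by simp
  next
    case False
    then show ?thesis using cellP_sum_point[OF A x] by (simp add: indicator_def)
  qed
  have le: "norm (g k x) \<le> norm (f x)" if "x \<in> {0..1}" for k x
  proof (cases "x \<in> \<rat>")
    case True then show ?thesis by (simp add: g_def)
  next
    case False
    then show ?thesis using sumpt[OF False that, of k] by (auto simp: g_def)
  qed
  have conv: "(\<lambda>k. g k x) \<longlonglongrightarrow> g0 x" if x01: "x \<in> {0..1}" for x
  proof (cases "x \<in> \<rat>")
    case True then show ?thesis by (simp add: g_def g0_def)
  next
    case xQ: False
    have ev: "eventually (\<lambda>k. (\<Sum>j<k. indicator (cellP A k j) x) = (indicator A x :: real)) sequentially"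
    proof (cases "x \<in> A")
      case True
      have "(\<Sum>j<k. indicator (cellP A k j) x) = (indicator A x :: real)" if "k \<ge> 1" for k
      proof -
        have k: "k > 0" using that by simp
        show ?thesis using cellP_sum_point[OF A xQ x01 k] cellP_in[OF A xQ True k] True by simp
      qed
      then show ?thesis by (auto simp: eventually_sequentially)
    next
      case xA: False
      show ?thesis
      proof (cases "A = {}")
        case True then show ?thesis by (simp add: cellP_def)
      next
        case Ane: False
        have d: "infdist x A > 0" by (rule infdist_pos_not_in_closed[OF A(1) Ane xA])
        obtain N :: nat where N: "1 / infdist x A < real N" using reals_Archimedean2 by blast
        have "(\<Sum>j<k. indicator (cellP A k j) x) = (indicator A x :: real)" if "k \<ge> N" for k
        proof -
          have Npos: "real N > 0" using N d by (smt (verit) divide_pos_pos)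
          have kpos: "real k > 0" using that Npos by linarith
          have kk: "1 / real k < infdist x A"
          proof -
            have "1 / real k \<le> 1 / real N" using that Npos by (simp add: frac_le)
            also have "1 / real N < infdist x A" using N d Npos by (simp add: field_simps)
            finally show ?thesis .
          qed
          have "x \<notin> cellP A k j" for j
          proof
            assume "x \<in> cellP A k j"
            then obtain a where a: "a \<in> A" "dist x a \<le> 1 / real k" using cellP_near[OF A] by blast
            have "infdist x A \<le> dist x a" using a(1) by (rule infdist_le)
            then show False using a(2) kk by linarith
          qed
          then show ?thesis using xA by simp
        qed
        then show ?thesis by (auto simp: eventually_sequentially)
      qed
    qed
    have "eventually (\<lambda>k. g k x = g0 x) sequentially"
      using ev by eventually_elim (simp add: g_def g0_def xQ)
    then show ?thesis by (rule tendsto_eventually)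
  qed
  have dc: "g0 integrable_on {0..1}" "(\<lambda>k. integral {0..1} (g k)) \<longlonglongrightarrow> integral {0..1} g0"
    using dominated_convergence[of g "{0..1}" "\<lambda>x. norm (f x)" g0] int_g fa le conv by auto
  from dc(2) show "(\<lambda>n. \<Sum>j<n. integral (cellP A n j) f) \<longlonglongrightarrow> integral A f"
    unfolding val_g val_g0 .
  have "(\<lambda>x. if x \<in> A then f x else 0) integrable_on {0..1}"
    by (rule integrable_spike[OF dc(1) nQ]) (auto simp: g0_def indicator_def)
  then have "f integrable_on (A \<inter> {0..1})" by (simp add: integrable_restrict_Int)
  then show "f integrable_on A" using A by (simp add: Int_absorb2)
qed

lemma pieces_le:
  fixes f :: "real \<Rightarrow> real" and A :: "real set"
  assumes f: "f absolutely_integrable_on {0..1}" and A: "closed A" "A \<subseteq> {0..1}"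
    and mono: "\<And>a b. a \<in> A \<Longrightarrow> b \<in> A \<Longrightarrow> a \<le> b \<Longrightarrow> integral {a..b} f \<le> 0"
  shows "integral A f \<le> 0"
proof -
  have t: "integral (cellP A n j) f \<le> 0" for n j
  proof (cases "A \<inter> {real j / real n .. real (Suc j) / real n} = {}")
    case True then show ?thesis by (simp add: cellP_def)
  next
    case False
    note p = cellP_props[OF A False]
    show ?thesis unfolding p(1) by (rule mono[OF p(2) p(3) p(5)])
  qed
  have "\<forall>n\<ge>0. (\<Sum>j<n. integral (cellP A n j) f) \<le> 0"
    by (auto intro: sum_nonpos t)
  then show ?thesis using LIMSEQ_le_const2[OF pieces_limit(1)[OF f A]] by blast
qed

lemma pieces_eq:
  fixes f :: "real \<Rightarrow> real" and A :: "real set"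
  assumes f: "f absolutely_integrable_on {0..1}" and A: "closed A" "A \<subseteq> {0..1}" "1 \<in> A"
    and gap: "\<And>x. x \<in> {0..1} \<Longrightarrow> A \<inter> {..x} \<noteq> {} \<Longrightarrow>
       integral {0..Sup (A \<inter> {..x})} f = integral {0..Inf (A \<inter> {x..})} f"
  shows "integral A f = integral {0..1} f - integral {0..Inf A} f"
proof -
  define F where "F x = integral {0..x} f" for x
  have fi: "f integrable_on {0..1}" using f by (auto simp: absolutely_integrable_on_def)
  have Fdiff: "integral {a..b} f = F b - F a" if "0 \<le> a" "a \<le> b" "b \<le> 1" for a b
  proof -
    have "f integrable_on {0..b}" using that by (auto intro: integrable_subinterval_real[OF fi])
    then have "integral {0..a} f + integral {a..b} f = integral {0..b} f"
      using that by (intro Henstock_Kurzweil_Integration.integral_combine) auto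
    then show ?thesis by (simp add: F_def)
  qed
  have trm: "integral (cellP A n j) f = F (Inf (A \<inter> {real (Suc j) / real n..})) - F (Inf (A \<inter> {real j / real n..}))"
    if j: "j < n" for n j
  proof (cases "A \<inter> {real j / real n .. real (Suc j) / real n} = {}")
    case True
    have "A \<inter> {real j / real n..} = A \<inter> {real (Suc j) / real n..}"
    proof
      have "real j / real n \<le> real (Suc j) / real n" by (simp add: divide_right_mono)
      then show "A \<inter> {real (Suc j) / real n..} \<subseteq> A \<inter> {real j / real n..}" by auto
      show "A \<inter> {real j / real n..} \<subseteq> A \<inter> {real (Suc j) / real n..}"
        using True by fastforce
    qed
    then show ?thesis using True by (simp add: cellP_def)
  next
    case False
    note p = cellP_props[OF A(1,2) False]
    let ?c = "{real j / real n .. real (Suc j) / real n}"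
    let ?b = "Sup (A \<inter> ?c)"
    let ?x = "real (Suc j) / real n"
    have x01: "?x \<in> {0..1}" using j by (auto simp: divide_le_eq_1)
    have z0: "0 \<le> real j / real n" by simp
    have zz: "0 \<le> Inf (A \<inter> {real j / real n..})" using p(4) z0 by linarith
    have bmax: "Sup (A \<inter> {..?x}) = ?b"
    proof (rule cSup_eq_maximum)
      show "?b \<in> A \<inter> {..?x}" using p by auto
      fix y assume y: "y \<in> A \<inter> {..?x}"
      show "y \<le> ?b"
      proof (cases "y \<ge> real j / real n")
        case True
        then have "y \<in> A \<inter> ?c" using y by auto
        then show ?thesis using A by (intro real_Sup_ge) auto
      next
        case False
        then show ?thesis using p by linarith
      qed
    qed
    have ne: "A \<inter> {..?x} \<noteq> {}" using p by auto
    have "F ?b = F (Inf (A \<inter> {?x..}))" using gap[OF x01 ne] bmax by (simp add: F_def)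
    moreover have "integral (cellP A n j) f = F ?b - F (Inf (A \<inter> {real j / real n..}))"
      unfolding p(1) using p x01 zz by (intro Fdiff) auto
    ultimately show ?thesis by simp
  qed
  have sums: "(\<Sum>j<n. integral (cellP A n j) f) = F 1 - F (Inf A)" if n: "n > 0" for n
  proof -
    have "(\<Sum>j<n. integral (cellP A n j) f) = (\<Sum>j<n. F (Inf (A \<inter> {real (Suc j) / real n..})) - F (Inf (A \<inter> {real j / real n..})))"
      by (rule sum.cong) (auto simp: trm)
    also have "\<dots> = F (Inf (A \<inter> {real n / real n..})) - F (Inf (A \<inter> {real 0 / real n..}))"
      by (rule sum_lessThan_telescope[where f = "\<lambda>j. F (Inf (A \<inter> {real j / real n..}))"])
    also have "A \<inter> {real n / real n..} = {1}" using n A by auto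
    also have "A \<inter> {real 0 / real n..} = A" using A by auto
    finally show ?thesis by simp
  qed
  have "(\<lambda>n. \<Sum>j<n. integral (cellP A n j) f) \<longlonglongrightarrow> F 1 - F (Inf A)"
  proof (rule tendsto_eventually)
    show "eventually (\<lambda>n. (\<Sum>j<n. integral (cellP A n j) f) = F 1 - F (Inf A)) sequentially"
      using sums by (auto simp: eventually_sequentially intro!: exI[of _ 1])
  qed
  with pieces_limit(1)[OF f A(1,2)] have "integral A f = F 1 - F (Inf A)" by (rule LIMSEQ_unique)
  then show ?thesis by (simp add: F_def)
qed


definition recset :: "(real \<Rightarrow> real) \<Rightarrow> real set" where
  "recset G = {a \<in> {0..1}. \<forall>u\<in>{a..1}. G u \<le> G a}"

lemma recset_sub: "recset G \<subseteq> {0..1}" by (auto simp: recset_def)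
lemma recset_1: "1 \<in> recset G" by (auto simp: recset_def)

lemma recset_closed:
  assumes Gc: "continuous_on {0..1} G"
  shows "closed (recset G)"
  unfolding closed_sequential_limits
proof (intro allI impI, elim conjE)
  fix x l assume xs: "\<forall>n. x n \<in> recset G" and lim: "x \<longlonglongrightarrow> l"
  have x01: "x n \<in> {0..1}" for n using xs by (auto simp: recset_def)
  have l01: "l \<in> {0..1}"
    using closed_sequential_limits[THEN iffD1, rule_format, of "{0..1::real}" x l] x01 lim by auto
  have Glim: "(\<lambda>n. G (x n)) \<longlonglongrightarrow> G l"
    by (rule continuous_on_tendsto_compose[OF Gc lim l01]) (use x01 in auto)
  have "G u \<le> G l" if u: "u \<in> {l..1}" for u
  proof (cases "u = l")
    case True then show ?thesis by simp
  next
    case False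
    then have ul: "l < u" using u by auto
    have "eventually (\<lambda>n. x n < u) sequentially"
      using lim ul by (simp add: order_tendstoD(2))
    then have "eventually (\<lambda>n. G u \<le> G (x n)) sequentially"
    proof eventually_elim
      case (elim n)
      then show ?case using xs u by (auto simp: recset_def)
    qed
    then show ?thesis using Glim by (simp add: tendsto_lowerbound)
  qed
  then show "l \<in> recset G" using l01 by (auto simp: recset_def)
qed

lemma recset_max:
  assumes Gc: "continuous_on {0..1} G" and w: "w \<in> {0..1}"
  shows "\<exists>x\<in>{w..1}. x \<in> recset G \<and> (\<forall>u\<in>{w..1}. G u \<le> G x)"
proof -
  have "continuous_on {w..1} G" by (rule continuous_on_subset[OF Gc]) (use w in auto)
  then obtain x where x: "x \<in> {w..1}" "\<forall>u\<in>{w..1}. G u \<le> G x"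
    using continuous_attains_sup[of "{w..1}" G] w by auto
  then have "x \<in> recset G" using w by (auto simp: recset_def)
  then show ?thesis using x by blast
qed

lemma recset_gap:
  assumes Gc: "continuous_on {0..1} G" and x: "x \<in> {0..1}" and ne: "recset G \<inter> {..x} \<noteq> {}"
  shows "G (Sup (recset G \<inter> {..x})) = G (Inf (recset G \<inter> {x..}))"
proof -
  let ?R = "recset G"
  have Rc: "closed ?R" by (rule recset_closed[OF Gc])
  let ?l = "Sup (?R \<inter> {..x})" and ?p = "Inf (?R \<inter> {x..})"
  have l: "?l \<in> ?R \<inter> {..x}" by (rule real_Sup_in) (use Rc ne recset_sub[of G] in auto)
  have ne2: "?R \<inter> {x..} \<noteq> {}" using recset_1 x by auto
  have p: "?p \<in> ?R \<inter> {x..}" by (rule real_Inf_in) (use Rc ne2 recset_sub[of G] in auto)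
  have lx: "?l \<le> x" and xp: "x \<le> ?p" using l p by auto
  have p1: "?p \<le> 1" using p recset_sub[of G] by auto
  have le: "G ?p \<le> G ?l" using l p lx xp p1 by (auto simp: recset_def)
  show ?thesis
  proof (rule ccontr)
    assume "G ?l \<noteq> G ?p"
    then have lt: "G ?p < G ?l" using le by simp
    then have lp: "?l < ?p" using lx xp by (cases "?l = ?p") auto
    have l01: "?l \<in> {0..1}" using l recset_sub[of G] by auto
    obtain d where d: "d > 0" "\<And>y. y \<in> {0..1} \<Longrightarrow> dist y ?l < d \<Longrightarrow> dist (G y) (G ?l) < G ?l - G ?p"
      using Gc l01 lt unfolding continuous_on_iff by (metis diff_gt_0_iff_gt)
    define w where "w = min (?l + d/2) ((?l + ?p)/2)"
    have w1: "?l < w" using d(1) lp by (simp add: w_def)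
    have w2: "w < ?p" using lp by (simp add: w_def min_less_iff_disj)
    have w5: "w \<le> ?l + d/2" by (simp add: w_def)
    have w3: "w \<in> {0..1}" using w1 w2 l01 p1 by auto
    have w4: "dist w ?l < d" using w1 w5 d(1) by (simp add: dist_real_def)
    note w = w1 w2 w3 w4
    have Gw: "G ?p < G w" using d(2)[OF w(3) w(4)] by (auto simp: dist_real_def)
    obtain x' where x': "x' \<in> {w..1}" "x' \<in> ?R" "\<forall>u\<in>{w..1}. G u \<le> G x'"
      using recset_max[OF Gc w(3)] by blast
    show False
    proof (cases "x' \<le> x")
      case True
      then have "x' \<le> ?l" using x' recset_sub[of G] by (intro real_Sup_ge) auto
      then show False using x' w by auto
    next
      case False
      then have "?p \<le> x'" using x' recset_sub[of G] by (intro real_Inf_le) auto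
      then have "G x' \<le> G ?p" using p x' by (auto simp: recset_def)
      moreover have "G w \<le> G x'" using x' w by auto
      ultimately show False using Gw by simp
    qed
  qed
qed

lemma measure_contra:
  fixes \<psi> :: "real \<Rightarrow> 'a::euclidean_space" and D :: "'a set" and h :: "real \<Rightarrow> real"
  assumes psi: "\<psi> absolutely_integrable_on {0..1}"
    and hi: "h absolutely_integrable_on {0..1}"
    and D: "closed D" "convex D"
    and out: "\<And>s. s \<in> {0..1} \<Longrightarrow> \<psi> s \<notin> D"
    and H1: "0 \<le> integral {0..1} h"
    and H2: "\<And>t. t \<in> {0<..<1} \<Longrightarrow> integral {0..1} h < integral {0..t} h"
    and key: "\<And>\<alpha> \<beta>. \<alpha> \<in> {0<..<1} \<Longrightarrow> (\<forall>u\<in>{\<alpha><..1}. integral {0..u} h < integral {0..\<alpha>} h)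
               \<Longrightarrow> \<beta> \<in> {\<alpha><..1} \<Longrightarrow> avg {\<alpha>..\<beta>} \<psi> \<in> D"
  shows False
proof -
  define H where "H x = integral {0..x} h" for x
  have hint: "h integrable_on {0..1}" using hi by (simp add: absolutely_integrable_on_def)
  have Hc: "continuous_on {0..1} H" unfolding H_def by (rule indefinite_integral_continuous_1[OF hint])
  define e where "e = (H (1/2) - H 1) / 2"
  have epos: "e > 0" using H2[of "1/2"] by (simp add: e_def H_def)
  define G where "G x = H x + e * x" for x
  have Gc: "continuous_on {0..1} G" unfolding G_def by (intro continuous_intros Hc)
  define g where "g s = h s + e" for s
  have gi: "g absolutely_integrable_on {0..1}"
    unfolding g_def by (rule set_integral_add(1)[OF hi]) simp
  have Gint: "integral {0..x} g = G x" if "x \<in> {0..1}" for x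
  proof -
    have "h integrable_on {0..x}" using that by (intro integrable_subinterval_real[OF hint]) auto
    then have "integral {0..x} g = integral {0..x} h + integral {0..x} (\<lambda>s. e)"
      unfolding g_def by (intro Henstock_Kurzweil_Integration.integral_add) (auto intro: integrable_const_ivl)
    then show ?thesis using that by (simp add: G_def H_def mult.commute)
  qed
  define A where "A = recset G"
  have Ac: "closed A" using recset_closed[OF Gc] by (simp add: A_def)
  have Asub: "A \<subseteq> {0..1}" and A1: "1 \<in> A" by (simp_all add: A_def recset_sub recset_1)
  have H0: "H 0 = 0" by (simp add: H_def)
  have G1pos: "G 0 < G 1" using H1 epos H0 by (simp add: G_def H_def)
  have A0: "0 \<notin> A"
  proof
    assume "0 \<in> A" then have "G 1 \<le> G 0" by (auto simp: A_def recset_def)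
    then show False using G1pos by simp
  qed
  obtain x1 where x1: "x1 \<in> {0..1}" "x1 \<in> A" "\<forall>u\<in>{0..1}. G u \<le> G x1"
    using recset_max[OF Gc, of 0] by (auto simp: A_def)
  define p where "p = Inf A"
  have pA: "p \<in> A" unfolding p_def using Ac A1 Asub by (intro real_Inf_in) auto
  have px1: "p \<le> x1" unfolding p_def by (rule real_Inf_le[OF x1(2) Asub])
  have Gp: "G x1 \<le> G p" using pA px1 x1 by (auto simp: A_def recset_def)
  have Ghalf: "G 1 < G (1/2)" using epos unfolding G_def e_def by (simp add: field_simps)
  have "G (1/2) \<le> G x1" using x1(3) by simp
  then have Gp1: "G 1 < G p" using Ghalf Gp by linarith
  have gapA: "integral {0..Sup (A \<inter> {..x})} g = integral {0..Inf (A \<inter> {x..})} g"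
    if x: "x \<in> {0..1}" and ne: "A \<inter> {..x} \<noteq> {}" for x
  proof -
    have S: "Sup (A \<inter> {..x}) \<in> A" using real_Sup_in[of "A \<inter> {..x}"] Ac ne Asub by auto
    have "1 \<in> A \<inter> {x..}" using A1 x by auto
    then have I: "Inf (A \<inter> {x..}) \<in> A" using real_Inf_in[of "A \<inter> {x..}"] Ac Asub by auto
    have "G (Sup (A \<inter> {..x})) = G (Inf (A \<inter> {x..}))"
      using recset_gap[OF Gc x] ne by (simp add: A_def)
    moreover have "integral {0..Sup (A \<inter> {..x})} g = G (Sup (A \<inter> {..x}))"
      using S Asub by (intro Gint) auto
    moreover have "integral {0..Inf (A \<inter> {x..})} g = G (Inf (A \<inter> {x..}))"
      using I Asub by (intro Gint) auto
    ultimately show ?thesis by simp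
  qed
  have intA: "integral A g = G 1 - G p"
    using pieces_eq[OF gi Ac Asub A1 gapA] Gint[of 1] Gint[of p] pA Asub by (auto simp: p_def)
  have Aneg: "\<not> negligible A"
  proof
    assume "negligible A" then have "integral A g = 0" by (rule integral_negligible)
    then show False using intA Gp1 by simp
  qed
  have keyA: "avg {\<alpha>..\<beta>} \<psi> \<in> D" if ab: "\<alpha> \<in> A" "\<alpha> < \<beta>" "\<beta> \<le> 1" for \<alpha> \<beta>
  proof -
    have a01: "\<alpha> \<in> {0<..<1}" using ab A0 Asub by (cases "\<alpha> = 0") auto
    have "\<forall>u\<in>{\<alpha><..1}. integral {0..u} h < integral {0..\<alpha>} h"
    proof
      fix u assume u: "u \<in> {\<alpha><..1}"
      have "G u \<le> G \<alpha>" using ab(1) u by (auto simp: A_def recset_def)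
      then have "H u \<le> H \<alpha> - e * (u - \<alpha>)" by (simp add: G_def algebra_simps)
      moreover have "e * (u - \<alpha>) > 0" using epos u by simp
      ultimately show "integral {0..u} h < integral {0..\<alpha>} h" by (simp add: H_def)
    qed
    then show ?thesis using key[OF a01] ab by auto
  qed
  have p1: "p < 1" using Gp1 pA Asub by (cases "p = 1") auto
  have Dne: "D \<noteq> {}" using keyA[OF pA p1] by auto
  obtain Q :: "'a set" where Qc: "countable Q" and Qd: "\<And>X. open X \<Longrightarrow> X \<noteq> {} \<Longrightarrow> \<exists>d\<in>Q. d \<in> X"
    using countable_dense_exists by blast
  define V where "V = {(q, r). q \<in> Q \<and> r \<in> (\<rat>::real set) \<and> r > 0 \<and> cball q r \<inter> D = {}}"
  have Vc: "countable V"
  proof -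
    have "V \<subseteq> Q \<times> \<rat>" by (auto simp: V_def)
    moreover have "countable (Q \<times> (\<rat>::real set))" using Qc countable_rat by (rule countable_SIGMA)
    ultimately show ?thesis by (rule countable_subset)
  qed
  define E where "E qr = {s \<in> A. \<psi> s \<in> ball (fst qr) (snd qr)}" for qr
  have cover: "A \<subseteq> (\<Union>qr\<in>V. E qr)"
  proof
    fix s assume s: "s \<in> A"
    then have "\<psi> s \<notin> D" using out Asub by auto
    then have "\<psi> s \<in> - D" by simp
    then obtain ee where ee: "ee > 0" "ball (\<psi> s) ee \<subseteq> - D"
      using D(1) open_contains_ball by (metis open_Compl)
    obtain q where q: "q \<in> Q" "q \<in> ball (\<psi> s) (ee/4)" using Qd[of "ball (\<psi> s) (ee/4)"] ee by auto
    obtain r where r: "r \<in> \<rat>" "ee/4 < r" "r < ee/2" using Rats_dense_in_real[of "ee/4" "ee/2"] ee by auto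
    have "cball q r \<subseteq> ball (\<psi> s) ee"
    proof
      fix y assume "y \<in> cball q r"
      then have "dist q y \<le> r" by simp
      moreover have "dist (\<psi> s) q < ee/4" using q by simp
      ultimately have "dist (\<psi> s) y < ee" using dist_triangle[of "\<psi> s" y q] r by linarith
      then show "y \<in> ball (\<psi> s) ee" by simp
    qed
    then have "cball q r \<inter> D = {}" using ee by auto
    then have "(q, r) \<in> V" using q r ee by (auto simp: V_def)
    moreover have "s \<in> E (q, r)" using s q r by (auto simp: E_def dist_commute)
    ultimately show "s \<in> (\<Union>qr\<in>V. E qr)" by blast
  qed
  obtain qr where qrV: "qr \<in> V" and Eneg: "\<not> negligible (E qr)"
  proof -
    { assume "\<forall>qr\<in>V. negligible (E qr)"
      then have "negligible (\<Union>qr\<in>V. E qr)" using Vc by (intro negligible_countable_Union) auto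
      then have "negligible A" using cover negligible_subset by blast
      then have False using Aneg by simp }
    then show ?thesis using that by blast
  qed
  obtain q r where qr: "qr = (q, r)" by (cases qr)
  have qrV': "q \<in> Q" "r > 0" "cball q r \<inter> D = {}" using qrV qr by (auto simp: V_def)
  have psim: "\<psi> \<in> borel_measurable (lebesgue_on {0..1})"
    using psi by (simp add: absolutely_integrable_measurable)
  have Emeas: "E qr \<in> sets lebesgue"
  proof -
    have "\<psi> -` ball q r \<inter> space (lebesgue_on {0..1}) \<in> sets (lebesgue_on {0..1})"
      by (rule measurable_sets[OF psim]) simp
    then have "\<psi> -` ball q r \<inter> {0..1} \<in> sets lebesgue"
      by (simp add: sets_restrict_space_iff)
    moreover have "A \<in> sets lebesgue" using Ac by simp
    ultimately have "A \<inter> (\<psi> -` ball q r \<inter> {0..1}) \<in> sets lebesgue" by blast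
    moreover have "E qr = A \<inter> (\<psi> -` ball q r \<inter> {0..1})" using Asub by (auto simp: E_def qr)
    ultimately show ?thesis by simp
  qed
  have Esub: "E qr \<subseteq> A" by (auto simp: E_def)
  have b01: "bounded {0..1::real}" by (rule compact_imp_bounded) simp
  have Elm: "E qr \<in> lmeasurable"
    by (rule bounded_set_imp_lmeasurable[OF _ Emeas]) (meson Asub Esub b01 bounded_subset order_trans)
  have mEpos: "measure lebesgue (E qr) > 0"
    using Eneg Elm negligible_iff_measure0 measure_nonneg by (metis order_le_less)
  obtain T where T: "closed T" "T \<subseteq> E qr" "E qr - T \<in> lmeasurable"
      "emeasure lebesgue (E qr - T) < ennreal (measure lebesgue (E qr))"
    using sets_lebesgue_inner_closed[OF Emeas mEpos] by blast
  have Tneg: "\<not> negligible T"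
  proof
    assume "negligible T"
    then have "emeasure lebesgue (E qr - T) = emeasure lebesgue (E qr)"
      by (intro emeasure_Diff_null_set) (auto simp: negligible_iff_null_sets Emeas)
    also have "\<dots> = ennreal (measure lebesgue (E qr))" using Elm by (simp add: emeasure_eq_measure2)
    finally show False using T(4) by simp
  qed
  have TA: "T \<subseteq> A" using T Esub by auto
  have T01: "T \<subseteq> {0..1}" using TA Asub by auto
  have Tball: "\<psi> s \<in> ball q r" if "s \<in> T" for s using that T(2) by (auto simp: E_def qr)
  obtain a c where ac: "\<forall>x\<in>D. inner a x < c" "\<forall>x\<in>cball q r. inner a x > c"
    using separating_hyperplane_closed_compact[OF D(2) D(1) convex_cball compact_cball, of q r] qrV' by auto
  have a0: "a \<noteq> 0"
  proof
    assume "a = 0"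
    moreover obtain y where "y \<in> D" using Dne by blast
    moreover have "q \<in> cball q r" using qrV' by simp
    ultimately show False using ac by fastforce
  qed
  define \<delta> where "\<delta> = inner a q - r * norm a - c"
  have \<delta>pos: "\<delta> > 0"
  proof -
    define w where "w = q - (r / norm a) *\<^sub>R a"
    have "dist q w = r" using a0 qrV' by (simp add: w_def dist_norm)
    then have "w \<in> cball q r" by simp
    then have "inner a w > c" using ac by blast
    moreover have "inner a w = inner a q - r * norm a"
      using a0 by (simp add: w_def inner_diff_right power2_norm_eq_inner[symmetric] power2_eq_square)
    ultimately show ?thesis by (simp add: \<delta>_def)
  qed
  define f where "f s = inner a (\<psi> s) - c" for s
  have fge: "\<delta> \<le> f s" if "s \<in> T" for s
  proof -
    have "dist q (\<psi> s) < r" using Tball[OF that] by simp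
    then have nr: "norm (\<psi> s - q) \<le> r" by (simp add: dist_norm norm_minus_commute)
    have "\<bar>inner a (\<psi> s - q)\<bar> \<le> norm a * norm (\<psi> s - q)" by (rule Cauchy_Schwarz_ineq2)
    also have "\<dots> \<le> norm a * r" using nr by (simp add: mult_left_mono)
    finally have "inner a (\<psi> s - q) \<ge> - (r * norm a)" by (simp add: mult.commute abs_le_iff)
    then show ?thesis by (simp add: f_def \<delta>_def inner_diff_right)
  qed
  have fi: "f absolutely_integrable_on {0..1}"
  proof -
    have "(inner a \<circ> \<psi>) absolutely_integrable_on {0..1}"
      by (rule absolutely_integrable_linear[OF psi bounded_linear_inner_right])
    then show ?thesis unfolding f_def o_def by (rule set_integral_diff(1)) simp
  qed
  let ?T' = "T \<union> {1}"
  have T'c: "closed ?T'" using T(1) by auto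
  have T'01: "?T' \<subseteq> {0..1}" using T01 by auto
  have mono: "integral {x..y} f \<le> 0" if xy: "x \<in> ?T'" "y \<in> ?T'" "x \<le> y" for x y
  proof (cases "x = y")
    case True then show ?thesis by simp
  next
    case False
    then have xy': "x < y" using xy by simp
    have y1: "y \<le> 1" using xy T01 by auto
    then have "x \<in> T" using xy xy' by auto
    then have xA: "x \<in> A" using TA by auto
    have avgD: "avg {x..y} \<psi> \<in> D" by (rule keyA[OF xA xy' y1])
    have x0: "0 \<le> x" using xA Asub by auto
    have psi01: "\<psi> integrable_on {0..1}" using psi by (simp add: absolutely_integrable_on_def)
    have sub: "{x..y} \<subseteq> {0..1}" using x0 y1 by auto
    have psixy: "\<psi> integrable_on {x..y}" by (rule integrable_subinterval_real[OF psi01 sub])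
    have i1: "(\<lambda>s. inner a (\<psi> s)) integrable_on {x..y}"
      using integrable_linear[OF psixy bounded_linear_inner_right] by (simp add: o_def)
    have i2: "(\<lambda>s. c) integrable_on {x..y}" by (rule integrable_const_ivl)
    have "integral {x..y} f = integral {x..y} (\<lambda>s. inner a (\<psi> s)) - integral {x..y} (\<lambda>s. c)"
      unfolding f_def by (rule Henstock_Kurzweil_Integration.integral_diff[OF i1 i2])
    also have "integral {x..y} (\<lambda>s. inner a (\<psi> s)) = inner a (integral {x..y} \<psi>)"
      using integral_linear[OF psixy bounded_linear_inner_right] by (simp add: o_def)
    also have "integral {x..y} \<psi> = (y - x) *\<^sub>R avg {x..y} \<psi>"
      using xy' by (simp add: avg_def)
    also have "integral {x..y} (\<lambda>s. c) = (y - x) * c" using xy' by simp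
    finally have "integral {x..y} f = (y - x) * (inner a (avg {x..y} \<psi>) - c)"
      by (simp add: algebra_simps)
    moreover have "inner a (avg {x..y} \<psi>) - c < 0" using ac avgD by auto
    moreover have "y - x > 0" using xy' by simp
    ultimately show ?thesis by (metis mult_pos_neg less_imp_le)
  qed
  have "integral ?T' f \<le> 0" by (rule pieces_le[OF fi T'c T'01 mono])
  moreover have "integral ?T' f = integral T f"
    by (rule integral_spike_set) (auto intro: negligible_subset[of "{1::real}"])
  ultimately have Tle: "integral T f \<le> 0" by simp
  have fT: "f integrable_on T" by (rule pieces_limit(2)[OF fi T(1) T01])
  have Tcomp: "compact T" using T(1) T01 by (meson b01 bounded_subset compact_eq_bounded_closed)
  have Tlm: "T \<in> lmeasurable" by (rule lmeasurable_compact[OF Tcomp])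
  have mT: "measure lebesgue T > 0"
    using Tneg Tlm negligible_iff_measure0 measure_nonneg by (metis order_le_less)
  have "integral T (\<lambda>s. \<delta>) \<le> integral T f"
    by (rule integral_le[OF integrable_on_const[OF Tlm] fT]) (use fge in auto)
  moreover have "integral T (\<lambda>s. \<delta>) = \<delta> * measure lebesgue T"
  proof -
    have "integral T (\<lambda>s. \<delta> *\<^sub>R (1::real)) = \<delta> *\<^sub>R integral T (\<lambda>s. 1)" by (rule integral_cmul)
    then show ?thesis using lmeasure_integral[OF Tlm] by simp
  qed
  ultimately have "\<delta> * measure lebesgue T \<le> 0" using Tle by simp
  moreover have "\<delta> * measure lebesgue T > 0" using \<delta>pos mT by simp
  ultimately show False by simp
qed


lemma seg_inner:
  assumes "z \<in> closed_segment p q"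
  shows "min (inner v p) (inner v q) \<le> inner v z" "inner v z \<le> max (inner v p) (inner v q)"
proof -
  obtain u where u: "0 \<le> u" "u \<le> 1" "z = (1 - u) *\<^sub>R p + u *\<^sub>R q"
    using assms by (auto simp: closed_segment_def)
  have iz: "inner v z = (1 - u) * inner v p + u * inner v q" using u by (simp add: inner_add_right)
  have a1: "(1 - u) * min (inner v p) (inner v q) \<le> (1 - u) * inner v p" using u by (intro mult_left_mono) auto
  have a2: "u * min (inner v p) (inner v q) \<le> u * inner v q" using u by (intro mult_left_mono) auto
  have b1: "(1 - u) * inner v p \<le> (1 - u) * max (inner v p) (inner v q)" using u by (intro mult_left_mono) auto
  have b2: "u * inner v q \<le> u * max (inner v p) (inner v q)" using u by (intro mult_left_mono) auto
  show "min (inner v p) (inner v q) \<le> inner v z" using a1 a2 iz by (simp add: algebra_simps)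
  show "inner v z \<le> max (inner v p) (inner v q)" using b1 b2 iz by (simp add: algebra_simps)
qed

lemma open_le_strict:
  fixes v :: "'a::euclidean_space"
  assumes "open K" "v \<noteq> 0" "\<forall>k\<in>K. inner v k \<le> c" "y \<in> K"
  shows "inner v y < c"
proof -
  obtain e where e: "e > 0" "ball y e \<subseteq> K" using assms open_contains_ball by blast
  define z where "z = y + (e / 2 / norm v) *\<^sub>R v"
  have "dist y z = e / 2" using assms(2) e by (simp add: z_def dist_norm)
  then have "z \<in> K" using e by auto
  then have "inner v z \<le> c" using assms by auto
  moreover have "inner v z = inner v y + e / 2 * norm v"
    using assms(2) by (simp add: z_def inner_add_right power2_norm_eq_inner[symmetric] power2_eq_square)
  moreover have "e / 2 * norm v > 0" using e assms(2) by simp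
  ultimately show ?thesis by linarith
qed

lemma int_split:
  fixes \<psi> :: "real \<Rightarrow> 'a::euclidean_space"
  assumes "\<psi> integrable_on {0..1}" "0 \<le> a" "a \<le> b" "b \<le> 1"
  shows "integral {a..b} \<psi> = integral {0..b} \<psi> - integral {0..a} \<psi>"
proof -
  have "\<psi> integrable_on {0..b}" using assms by (intro integrable_subinterval_real[OF assms(1)]) auto
  then have "integral {0..a} \<psi> + integral {a..b} \<psi> = integral {0..b} \<psi>"
    using assms by (intro Henstock_Kurzweil_Integration.integral_combine) auto
  then show ?thesis by (simp add: algebra_simps)
qed

lemma avg_in_closed_convex:
  fixes \<psi> :: "real \<Rightarrow> 'a::euclidean_space"
  assumes D: "closed D" "convex D" and ab: "a < b" and pi: "\<psi> integrable_on {a..b}"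
    and inD: "\<And>s. s \<in> {a..b} \<Longrightarrow> \<psi> s \<in> D"
  shows "avg {a..b} \<psi> \<in> D"
proof (rule ccontr)
  assume nD: "avg {a..b} \<psi> \<notin> D"
  obtain v c where vc: "inner v (avg {a..b} \<psi>) < c" "\<forall>x\<in>D. inner v x > c"
    using separating_hyperplane_closed_point[OF D(2) D(1) nD] by blast
  have i1: "(\<lambda>s. inner v (\<psi> s)) integrable_on {a..b}"
    using integrable_linear[OF pi bounded_linear_inner_right] by (simp add: o_def)
  have "integral {a..b} (\<lambda>s. c) \<le> integral {a..b} (\<lambda>s. inner v (\<psi> s))"
    by (rule integral_le[OF integrable_const_ivl i1]) (use vc inD in \<open>auto intro: less_imp_le\<close>)
  moreover have "integral {a..b} (\<lambda>s. c) = (b - a) * c" using ab by simp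
  moreover have "integral {a..b} (\<lambda>s. inner v (\<psi> s)) = inner v (integral {a..b} \<psi>)"
    using integral_linear[OF pi bounded_linear_inner_right] by (simp add: o_def)
  moreover have "integral {a..b} \<psi> = (b - a) *\<^sub>R avg {a..b} \<psi>" using ab by (simp add: avg_def)
  ultimately have "(b - a) * c \<le> (b - a) * inner v (avg {a..b} \<psi>)" using ab by simp
  then have "c \<le> inner v (avg {a..b} \<psi>)" using ab by simp
  then show False using vc by simp
qed

lemma core:
  fixes \<Omega>O \<Omega>I :: "'a::euclidean_space set" and \<psi> :: "real \<Rightarrow> 'a"
  assumes SA: "standing_assumptions \<Omega>O \<Omega>I" and psiA: "\<psi> \<in> A_class \<Omega>O \<Omega>I"
    and x0K: "avg {0..1} \<psi> \<notin> interior (convex hull \<Omega>I)"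
    and hit: "\<And>t. t \<in> {0<..<1} \<Longrightarrow> \<exists>y \<in> interior (convex hull \<Omega>I). y \<in> closed_segment (avg {0..1} \<psi>) (avg {t..1} \<psi>)"
  shows False
proof -
  define C where "C = convex hull \<Omega>I"
  define K where "K = interior C"
  have clI: "closed \<Omega>I" and opO: "open \<Omega>O" and clC: "closure C \<subseteq> \<Omega>O"
    and comp5: "\<forall>\<omega> \<in> components (K - \<Omega>I). \<exists>L. supporting_hyperplane C L \<and> frontier \<omega> - \<Omega>I \<subseteq> L"
    using SA unfolding standing_assumptions_def C_def K_def by auto
  have psi: "\<psi> absolutely_integrable_on {0..1}" and fr: "\<And>s. s \<in> {0..1} \<Longrightarrow> \<psi> s \<in> frontier \<Omega>O"
    and avI: "\<And>a b. 0 \<le> a \<Longrightarrow> a < b \<Longrightarrow> b \<le> 1 \<Longrightarrow> avg {a..b} \<psi> \<notin> \<Omega>I"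
    using psiA unfolding A_class_def by auto
  have psi01: "\<psi> integrable_on {0..1}" using psi by (simp add: absolutely_integrable_on_def)
  define I where "I x = integral {0..x} \<psi>" for x
  have Ic: "continuous_on {0..1} I" unfolding I_def by (rule indefinite_integral_continuous_1[OF psi01])
  have I0: "I 0 = 0" by (simp add: I_def)
  define x0 where "x0 = avg {0..1} \<psi>"
  have avgI: "avg {a..b} \<psi> = (1 / (b - a)) *\<^sub>R (I b - I a)" if "0 \<le> a" "a < b" "b \<le> 1" for a b
    using int_split[OF psi01, of a b] that by (simp add: avg_def I_def)
  have x0I: "x0 = I 1" using avgI[of 0 1] I0 by (simp add: x0_def)
  define R where "R t = (1 / (1 - t)) *\<^sub>R (I 1 - I t)" for t
  have Ravg: "avg {t..1} \<psi> = R t" if "0 \<le> t" "t < 1" for t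
    using avgI[of t 1] that by (simp add: R_def)
  have Rc: "continuous_on {0..<1} R"
    unfolding R_def by (intro continuous_intros continuous_on_subset[OF Ic]) auto
  have R0: "R 0 = x0" using x0I I0 by (simp add: R_def)
  have x0nI: "x0 \<notin> \<Omega>I" using avI[of 0 1] by (simp add: x0_def)
  obtain e0 where e0: "e0 > 0" "ball x0 e0 \<subseteq> - \<Omega>I"
    using clI x0nI open_contains_ball by (metis ComplI open_Compl)
  have "0 \<in> {0..<1::real}" by simp
  then obtain d where d: "d > 0" "\<And>t. t \<in> {0..<1} \<Longrightarrow> dist t 0 < d \<Longrightarrow> dist (R t) (R 0) < e0"
    using Rc e0(1) unfolding continuous_on_iff by metis
  define t0 where "t0 = min (d/2) (1/2)"
  have t0: "t0 \<in> {0<..<1}" using d by (auto simp: t0_def)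
  have Rt0: "R t0 \<in> ball x0 e0"
    using d(2)[of t0] t0 d(1) R0 by (auto simp: t0_def dist_real_def dist_commute)
  obtain y0 where y0: "y0 \<in> K" "y0 \<in> closed_segment x0 (R t0)"
    using hit[OF t0] Ravg[of t0] t0 by (auto simp: C_def K_def x0_def)
  have segball: "closed_segment x0 (R t0) \<subseteq> ball x0 e0"
    by (rule closed_segment_subset) (use Rt0 e0 in auto)
  have y0ball: "y0 \<in> ball x0 e0" using y0 segball by auto
  have y0I: "y0 \<notin> \<Omega>I" using y0ball e0 by auto
  define \<omega> where "\<omega> = connected_component_set (K - \<Omega>I) y0"
  have \<omega>c: "\<omega> \<in> components (K - \<Omega>I)" unfolding \<omega>_def by (rule componentsI) (use y0 y0I in auto)
  obtain L where L: "supporting_hyperplane C L" "frontier \<omega> - \<Omega>I \<subseteq> L" using comp5 \<omega>c by blast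
  obtain nv b where nv: "nv \<noteq> 0" "L = {x. nv \<bullet> x = b}" "\<forall>y\<in>C. nv \<bullet> y \<le> b"
    using L(1) unfolding supporting_hyperplane_def by blast
  have Kstrict: "nv \<bullet> y < b" if "y \<in> K" for y
    using open_le_strict[of K nv b y] that nv interior_subset[of C] by (auto simp: K_def)
  have \<omega>sub: "\<omega> \<subseteq> K - \<Omega>I" unfolding \<omega>_def by (rule connected_component_subset)
  have y0\<omega>: "y0 \<in> \<omega>" unfolding \<omega>_def using y0 y0I by auto
  have path: "P \<subseteq> \<omega>" if P: "connected P" "P \<inter> \<Omega>I = {}" "\<forall>p\<in>P. nv \<bullet> p < b" "P \<inter> \<omega> \<noteq> {}" for P
  proof (rule ccontr)
    assume "\<not> P \<subseteq> \<omega>" then have "P - \<omega> \<noteq> {}" by blast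
    then obtain z where z: "z \<in> P" "z \<in> frontier \<omega>" using connected_Int_frontier[OF P(1) P(4)] by blast
    then have "z \<in> L" using L(2) P(2) by blast
    then show False using P(3) z nv(2) by auto
  qed
  have x0n\<omega>: "x0 \<notin> \<omega>" using x0K \<omega>sub by (auto simp: x0_def C_def K_def)
  have bx0: "b \<le> nv \<bullet> x0"
  proof -
    have "closed_segment y0 x0 \<inter> \<omega> \<noteq> {}" using y0\<omega> by auto
    moreover have "closed_segment y0 x0 - \<omega> \<noteq> {}" using x0n\<omega> by auto
    ultimately obtain z where z: "z \<in> closed_segment y0 x0" "z \<in> frontier \<omega>"
      using connected_Int_frontier[OF connected_segment] by blast
    have "closed_segment y0 x0 \<subseteq> ball x0 e0" by (rule closed_segment_subset) (use y0ball e0 in auto)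
    then have "z \<notin> \<Omega>I" using z e0 by auto
    then have "nv \<bullet> z = b" using z L(2) nv(2) by auto
    moreover have "nv \<bullet> z \<le> max (nv \<bullet> y0) (nv \<bullet> x0)" by (rule seg_inner(2)[OF z(1)])
    moreover have "nv \<bullet> y0 < b" using Kstrict y0 by auto
    ultimately show ?thesis by (simp add: max_def split: if_splits)
  qed
  have Rlt: "nv \<bullet> R t < b" if t: "t \<in> {0<..<1}" for t
  proof -
    obtain y where y: "y \<in> K" "y \<in> closed_segment x0 (R t)"
      using hit[OF t] Ravg[of t] t by (auto simp: C_def K_def x0_def)
    have "min (nv \<bullet> x0) (nv \<bullet> R t) \<le> nv \<bullet> y" by (rule seg_inner(1)[OF y(2)])
    moreover have "nv \<bullet> y < b" using Kstrict y by auto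
    ultimately show ?thesis using bx0 by (simp add: min_def split: if_splits)
  qed
  have Rt0\<omega>: "R t0 \<in> \<omega>"
  proof -
    have "closed_segment y0 (R t0) \<subseteq> \<omega>"
    proof (rule path)
      show "connected (closed_segment y0 (R t0))" by simp
      have "closed_segment y0 (R t0) \<subseteq> ball x0 e0" by (rule closed_segment_subset) (use y0ball Rt0 in auto)
      then show "closed_segment y0 (R t0) \<inter> \<Omega>I = {}" using e0 by auto
      show "\<forall>p\<in>closed_segment y0 (R t0). nv \<bullet> p < b"
      proof
        fix p assume "p \<in> closed_segment y0 (R t0)"
        then have "nv \<bullet> p \<le> max (nv \<bullet> y0) (nv \<bullet> R t0)" by (rule seg_inner(2))
        moreover have "nv \<bullet> y0 < b" using Kstrict y0 by auto
        moreover have "nv \<bullet> R t0 < b" using Rlt t0 by auto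
        ultimately show "nv \<bullet> p < b" by (simp add: max_def split: if_splits)
      qed
      show "closed_segment y0 (R t0) \<inter> \<omega> \<noteq> {}" using y0\<omega> by auto
    qed
    then show ?thesis by auto
  qed
  have R\<omega>: "R t \<in> \<omega>" if "t \<in> {0<..<1}" for t
  proof -
    have "R ` {0<..<1} \<subseteq> \<omega>"
    proof (rule path)
      show "connected (R ` {0<..<1})"
        by (rule connected_continuous_image[OF continuous_on_subset[OF Rc]]) auto
      show "R ` {0<..<1} \<inter> \<Omega>I = {}"
      proof -
        have "R s \<notin> \<Omega>I" if "s \<in> {0<..<1}" for s using avI[of s 1] Ravg[of s] that by auto
        then show ?thesis by blast
      qed
      show "\<forall>p\<in>R ` {0<..<1}. nv \<bullet> p < b" using Rlt by auto
      have "R t0 \<in> R ` {0<..<1}" using t0 by blast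
      then show "R ` {0<..<1} \<inter> \<omega> \<noteq> {}" using Rt0\<omega> by blast
    qed
    then show ?thesis using that by auto
  qed
  define h where "h s = nv \<bullet> \<psi> s - b" for s
  have hi: "h absolutely_integrable_on {0..1}"
  proof -
    have "(inner nv \<circ> \<psi>) absolutely_integrable_on {0..1}"
      by (rule absolutely_integrable_linear[OF psi bounded_linear_inner_right])
    then show ?thesis unfolding h_def o_def by (rule set_integral_diff(1)) simp
  qed
  have hdiff: "integral {0..v} h - integral {0..u} h = nv \<bullet> (I v - I u) - b * (v - u)"
    if uv: "0 \<le> u" "u \<le> v" "v \<le> 1" for u v
  proof -
    have h01: "h integrable_on {0..1}" using hi by (simp add: absolutely_integrable_on_def)
    have sub: "{u..v} \<subseteq> {0..1}" using uv by auto
    have psiuv: "\<psi> integrable_on {u..v}" by (rule integrable_subinterval_real[OF psi01 sub])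
    have i1: "(\<lambda>s. inner nv (\<psi> s)) integrable_on {u..v}"
      using integrable_linear[OF psiuv bounded_linear_inner_right] by (simp add: o_def)
    have "integral {0..v} h - integral {0..u} h = integral {u..v} h"
      using int_split[OF h01 uv] by simp
    also have "\<dots> = integral {u..v} (\<lambda>s. inner nv (\<psi> s)) - integral {u..v} (\<lambda>s. b)"
      unfolding h_def by (rule Henstock_Kurzweil_Integration.integral_diff[OF i1 integrable_const_ivl])
    also have "integral {u..v} (\<lambda>s. inner nv (\<psi> s)) = nv \<bullet> integral {u..v} \<psi>"
      using integral_linear[OF psiuv bounded_linear_inner_right] by (simp add: o_def)
    also have "integral {u..v} \<psi> = I v - I u" using int_split[OF psi01 uv] by (simp add: I_def)
    finally show ?thesis using uv by simp
  qed
  have avgh: "nv \<bullet> avg {u..v} \<psi> - b = (integral {0..v} h - integral {0..u} h) / (v - u)"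
    if uv: "0 \<le> u" "u < v" "v \<le> 1" for u v
  proof -
    have "nv \<bullet> avg {u..v} \<psi> = (nv \<bullet> (I v - I u)) / (v - u)" using avgI[OF uv] by simp
    then show ?thesis using hdiff[of u v] uv by (simp add: field_simps)
  qed
  show False
  proof (rule measure_contra[OF psi hi, of "closure C"])
    show "closed (closure C)" by simp
    show "convex (closure C)" by (simp add: C_def convex_closure)
    show "\<psi> s \<notin> closure C" if "s \<in> {0..1}" for s
    proof
      assume "\<psi> s \<in> closure C"
      then have "\<psi> s \<in> \<Omega>O" using clC by auto
      moreover have "\<psi> s \<in> frontier \<Omega>O" using fr that by auto
      ultimately show False using opO by (simp add: frontier_def interior_open)
    qed
    show "0 \<le> integral {0..1} h"
      using hdiff[of 0 1] bx0 I0 x0I by simp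
    show "integral {0..1} h < integral {0..t} h" if t: "t \<in> {0<..<1}" for t
    proof -
      have "nv \<bullet> avg {t..1} \<psi> - b < 0" using Rlt[OF t] Ravg[of t] t by simp
      then have "(integral {0..1} h - integral {0..t} h) / (1 - t) < 0" using avgh[of t 1] t by simp
      then show ?thesis using t by (simp add: divide_less_0_iff)
    qed
    show "avg {\<alpha>..\<beta>} \<psi> \<in> closure C"
      if a: "\<alpha> \<in> {0<..<1}" and mono: "\<forall>u\<in>{\<alpha><..1}. integral {0..u} h < integral {0..\<alpha>} h"
        and bt: "\<beta> \<in> {\<alpha><..1}" for \<alpha> \<beta>
    proof -
      define P where "P = (\<lambda>u. avg {\<alpha>..u} \<psi>) ` {\<alpha><..1}"
      have "P \<subseteq> \<omega>"
      proof (rule path)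
        have cf: "continuous_on {\<alpha><..1} (\<lambda>u. (1 / (u - \<alpha>)) *\<^sub>R (I u - I \<alpha>))"
          using a by (intro continuous_intros continuous_on_subset[OF Ic]) auto
        have eqf: "(1 / (u - \<alpha>)) *\<^sub>R (I u - I \<alpha>) = avg {\<alpha>..u} \<psi>" if "u \<in> {\<alpha><..1}" for u
          using avgI[of \<alpha> u] a that by auto
        have "continuous_on {\<alpha><..1} (\<lambda>u. avg {\<alpha>..u} \<psi>)"
          by (rule continuous_on_eq[OF cf eqf])
        then show "connected P" unfolding P_def by (rule connected_continuous_image) auto
        show "P \<inter> \<Omega>I = {}"
        proof -
          have "avg {\<alpha>..u} \<psi> \<notin> \<Omega>I" if "u \<in> {\<alpha><..1}" for u using avI[of \<alpha> u] a that by auto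
          then show ?thesis unfolding P_def by blast
        qed
        show "\<forall>p\<in>P. nv \<bullet> p < b"
        proof
          fix p assume "p \<in> P"
          then obtain u where u: "u \<in> {\<alpha><..1}" "p = avg {\<alpha>..u} \<psi>" unfolding P_def by blast
          have "(integral {0..u} h - integral {0..\<alpha>} h) / (u - \<alpha>) < 0"
            using mono u by (simp add: divide_less_0_iff)
          then show "nv \<bullet> p < b" using avgh[of \<alpha> u] a u by simp
        qed
        have "avg {\<alpha>..1} \<psi> \<in> \<omega>" using Ravg[of \<alpha>] R\<omega>[OF a] a by simp
        moreover have "avg {\<alpha>..1} \<psi> \<in> P" unfolding P_def using a by (intro rev_image_eqI[of 1]) auto
        ultimately show "P \<inter> \<omega> \<noteq> {}" by blast
      qed
      then have "avg {\<alpha>..\<beta>} \<psi> \<in> \<omega>" using bt unfolding P_def by auto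
      then have "avg {\<alpha>..\<beta>} \<psi> \<in> C" using \<omega>sub interior_subset[of C] by (auto simp: K_def)
      then show ?thesis using closure_subset by auto
    qed
  qed
qed

lemma refl_has_integral:
  fixes f :: "real \<Rightarrow> 'a::euclidean_space"
  assumes "(f has_integral i) {a..b}"
  shows "((\<lambda>x. f (1 - x)) has_integral i) {1-b..1-a}"
proof -
  have "((\<lambda>x. f ((-1) *\<^sub>R x + 1)) has_integral (1 / (\<bar>-1\<bar> ^ DIM(real))) *\<^sub>R i)
          ((\<lambda>x. (1 / (-1)) *\<^sub>R x + -((1 / (-1)) *\<^sub>R 1)) ` cbox a b)"
    by (rule has_integral_affinity) (use assms in auto)
  moreover have e: "\<And>x::real. (-1) *\<^sub>R x + 1 = 1 - x" by simp
  moreover have im: "(\<lambda>x::real. (1 / (-1)) *\<^sub>R x + -((1 / (-1)) *\<^sub>R 1)) ` cbox a b = {1-b..1-a}"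
  proof -
    have "(\<lambda>x::real. (1 / (-1)) *\<^sub>R x + -((1 / (-1)) *\<^sub>R 1)) = (\<lambda>x. 1 - x)" by auto
    moreover have "(\<lambda>x::real. 1 - x) ` {a..b} = {1-b..1-a}"
    proof
      show "(\<lambda>x. 1 - x) ` {a..b} \<subseteq> {1-b..1-a}" by auto
      show "{1-b..1-a} \<subseteq> (\<lambda>x. 1 - x) ` {a..b}"
      proof
        fix y assume "y \<in> {1-b..1-a}"
        then have "1 - y \<in> {a..b}" by auto
        then show "y \<in> (\<lambda>x. 1 - x) ` {a..b}" by (rule rev_image_eqI) simp
      qed
    qed
    ultimately show ?thesis by simp
  qed
  ultimately show ?thesis by (simp only: e im) simp
qed

lemma refl_integral:
  fixes \<psi> :: "real \<Rightarrow> 'a::euclidean_space"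
  assumes "\<psi> integrable_on {0..1}" "0 \<le> a" "a \<le> b" "b \<le> 1"
  shows "integral {a..b} (\<lambda>s. \<psi> (1 - s)) = integral {1-b..1-a} \<psi>"
proof -
  have "\<psi> integrable_on {1-b..1-a}" using assms by (intro integrable_subinterval_real[OF assms(1)]) auto
  then have "(\<psi> has_integral integral {1-b..1-a} \<psi>) {1-b..1-a}" by (simp add: has_integral_integral)
  then have "((\<lambda>s. \<psi> (1 - s)) has_integral integral {1-b..1-a} \<psi>) {1-(1-a)..1-(1-b)}"
    by (rule refl_has_integral)
  then show ?thesis by (simp add: integral_unique)
qed

lemma refl_avg:
  fixes \<psi> :: "real \<Rightarrow> 'a::euclidean_space"
  assumes "\<psi> integrable_on {0..1}" "0 \<le> a" "a < b" "b \<le> 1"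
  shows "avg {a..b} (\<lambda>s. \<psi> (1 - s)) = avg {1-b..1-a} \<psi>"
  using refl_integral[of \<psi> a b] assms by (simp add: avg_def)

lemma A_refl:
  assumes "\<psi> \<in> A_class \<Omega>O \<Omega>I"
  shows "(\<lambda>s. \<psi> (1 - s)) \<in> A_class \<Omega>O \<Omega>I"
proof -
  have psi: "\<psi> absolutely_integrable_on {0..1}" and fr: "\<And>s. s \<in> {0..1} \<Longrightarrow> \<psi> s \<in> frontier \<Omega>O"
    and avI: "\<And>a b. 0 \<le> a \<Longrightarrow> a < b \<Longrightarrow> b \<le> 1 \<Longrightarrow> avg {a..b} \<psi> \<notin> \<Omega>I"
    using assms unfolding A_class_def by auto
  have p1: "\<psi> integrable_on {0..1}" and p2: "(\<lambda>x. norm (\<psi> x)) integrable_on {0..1}"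
    using psi by (auto simp: absolutely_integrable_on_def)
  have "((\<lambda>x. \<psi> (1 - x)) has_integral integral {0..1} \<psi>) {1-1..1-0}"
    by (rule refl_has_integral) (use p1 in \<open>simp add: has_integral_integral\<close>)
  then have q1: "(\<lambda>x. \<psi> (1 - x)) integrable_on {0..1}" by (auto simp: integrable_on_def)
  have "((\<lambda>x. norm (\<psi> (1 - x))) has_integral integral {0..1} (\<lambda>x. norm (\<psi> x))) {1-1..1-0}"
    by (rule refl_has_integral[of "\<lambda>x. norm (\<psi> x)"]) (use p2 in \<open>simp add: has_integral_integral\<close>)
  then have q2: "(\<lambda>x. norm (\<psi> (1 - x))) integrable_on {0..1}" by (auto simp: integrable_on_def)
  have "(\<lambda>s. \<psi> (1 - s)) absolutely_integrable_on {0..1}"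
    using q1 q2 by (simp add: absolutely_integrable_on_def)
  moreover have "\<forall>x\<in>{0..1}. \<psi> (1 - x) \<in> frontier \<Omega>O" using fr by auto
  moreover have "avg {a..b} (\<lambda>s. \<psi> (1 - s)) \<notin> \<Omega>I" if "0 \<le> a" "a < b" "b \<le> 1" for a b
    using refl_avg[OF p1 that] avI[of "1-b" "1-a"] that by auto
  ultimately show ?thesis unfolding A_class_def by auto
qed

theorem mainTheorem9:
  fixes \<Omega>O \<Omega>I :: "'a::euclidean_space set" and \<psi> :: "real \<Rightarrow> 'a"
  assumes "standing_assumptions \<Omega>O \<Omega>I"
    and "\<psi> \<in> A_class \<Omega>O \<Omega>I"
    and "avg {0..1} \<psi> \<notin> interior (convex hull \<Omega>I)"
  shows "\<exists>t. 0 < t \<and> t < 1 \<and>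
    closed_segment (avg {0..t} \<psi>) (avg {t..1} \<psi>)
      \<subseteq> closure \<Omega>O - interior (convex hull \<Omega>I)"
proof (rule ccontr)
  assume neg: "\<not> ?thesis"
  note SA = assms(1) and psiA = assms(2) and x0K = assms(3)
  define C where "C = convex hull \<Omega>I"
  define K where "K = interior C"
  define x0 where "x0 = avg {0..1} \<psi>"
  have cvO: "convex \<Omega>O" and Kne: "K \<noteq> {}"
    using SA unfolding standing_assumptions_def strictly_convex_def C_def K_def by auto
  have psi: "\<psi> absolutely_integrable_on {0..1}" and fr: "\<And>s. s \<in> {0..1} \<Longrightarrow> \<psi> s \<in> frontier \<Omega>O"
    using psiA unfolding A_class_def by auto
  have psi01: "\<psi> integrable_on {0..1}" using psi by (simp add: absolutely_integrable_on_def)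
  define I where "I x = integral {0..x} \<psi>" for x
  have Ic: "continuous_on {0..1} I" unfolding I_def by (rule indefinite_integral_continuous_1[OF psi01])
  have I0: "I 0 = 0" by (simp add: I_def)
  have avgI: "avg {a..b} \<psi> = (1 / (b - a)) *\<^sub>R (I b - I a)" if "0 \<le> a" "a < b" "b \<le> 1" for a b
    using int_split[OF psi01, of a b] that by (simp add: avg_def I_def)
  have x0I: "x0 = I 1" using avgI[of 0 1] I0 by (simp add: x0_def)
  define Lf where "Lf t = (1 / t) *\<^sub>R I t" for t
  define R where "R t = (1 / (1 - t)) *\<^sub>R (I 1 - I t)" for t
  have Lavg: "avg {0..t} \<psi> = Lf t" if "0 < t" "t \<le> 1" for t
    using avgI[of 0 t] that I0 by (simp add: Lf_def)
  have Ravg: "avg {t..1} \<psi> = R t" if "0 \<le> t" "t < 1" for t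
    using avgI[of t 1] that by (simp add: R_def)
  have comb: "x0 = t *\<^sub>R Lf t + (1 - t) *\<^sub>R R t" if "t \<in> {0<..<1}" for t
    using that x0I by (simp add: Lf_def R_def)
  have x0seg: "x0 \<in> closed_segment (Lf t) (R t)" if t: "t \<in> {0<..<1}" for t
  proof -
    have "x0 = (1 - (1 - t)) *\<^sub>R Lf t + (1 - t) *\<^sub>R R t" using comb[OF t] by simp
    then show ?thesis unfolding closed_segment_def using t by (intro CollectI exI[of _ "1 - t"]) auto
  qed
  have inO: "avg {a..b} \<psi> \<in> closure \<Omega>O" if "0 \<le> a" "a < b" "b \<le> 1" for a b
  proof (rule avg_in_closed_convex)
    show "closed (closure \<Omega>O)" "convex (closure \<Omega>O)" using cvO by (auto simp: convex_closure)
    show "\<psi> integrable_on {a..b}" using that by (intro integrable_subinterval_real[OF psi01]) auto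
    show "\<psi> s \<in> closure \<Omega>O" if "s \<in> {a..b}" for s
      using fr[of s] that \<open>0 \<le> a\<close> \<open>b \<le> 1\<close> by (auto simp: frontier_def)
  qed (use that in auto)
  have hitK: "\<exists>y\<in>K. y \<in> closed_segment (Lf t) (R t)" if t: "t \<in> {0<..<1}" for t
  proof -
    have "closed_segment (avg {0..t} \<psi>) (avg {t..1} \<psi>) \<subseteq> closure \<Omega>O"
      by (rule closed_segment_subset) (use inO t cvO in \<open>auto simp: convex_closure\<close>)
    moreover have "\<not> closed_segment (avg {0..t} \<psi>) (avg {t..1} \<psi>) \<subseteq> closure \<Omega>O - K"
      using neg t by (auto simp: K_def C_def)
    ultimately show ?thesis using Lavg[of t] Ravg[of t] t by auto
  qed
  have x0nK: "x0 \<notin> K" using x0K by (simp add: x0_def K_def C_def)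
  obtain lv c0 where lc: "lv \<noteq> 0" "\<forall>x\<in>K. inner lv x \<le> c0" "\<forall>x\<in>{x0}. inner lv x \<ge> c0"
    using separating_hyperplane_sets[of K "{x0}"] Kne x0nK
    by (auto simp: K_def C_def convex_interior convex_convex_hull)
  have Klt: "inner lv y < inner lv x0" if "y \<in> K" for y
    using open_le_strict[of K lv c0 y] lc that by (auto simp: K_def)
  define \<phi> where "\<phi> t = inner lv (Lf t) - inner lv x0" for t
  have signrel: "(1 - t) * (inner lv (R t) - inner lv x0) = - (t * \<phi> t)" if "t \<in> {0<..<1}" for t
  proof -
    have "inner lv x0 = t * inner lv (Lf t) + (1 - t) * inner lv (R t)"
      using comb[OF that] by (simp add: inner_add_right)
    then show ?thesis by (simp add: \<phi>_def algebra_simps)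
  qed
  have \<phi>c: "continuous_on {0<..<1} \<phi>"
    unfolding \<phi>_def Lf_def by (intro continuous_intros continuous_on_subset[OF Ic]) auto
  show False
  proof (cases "\<exists>t\<in>{0<..<1}. \<phi> t = 0")
    case True
    then obtain t where t: "t \<in> {0<..<1}" "\<phi> t = 0" by blast
    have eR: "inner lv (R t) = inner lv x0" using signrel[OF t(1)] t by simp
    have eL: "inner lv (Lf t) = inner lv x0" using t(2) by (simp add: \<phi>_def)
    obtain y where y: "y \<in> K" "y \<in> closed_segment (Lf t) (R t)" using hitK[OF t(1)] by blast
    have "min (inner lv (Lf t)) (inner lv (R t)) \<le> inner lv y" by (rule seg_inner(1)[OF y(2)])
    then show False using Klt[OF y(1)] eR eL by simp
  next
    case noZ: False
    show False
    proof (cases "\<forall>t\<in>{0<..<1}. \<phi> t > 0")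
      case pos: True
      show False
      proof (rule core[OF SA psiA x0K])
        fix t :: real assume t: "t \<in> {0<..<1}"
        obtain y where y: "y \<in> K" "y \<in> closed_segment (Lf t) (R t)" using hitK[OF t] by blast
        have "y \<notin> closed_segment (Lf t) x0"
        proof
          assume "y \<in> closed_segment (Lf t) x0"
          then have "min (inner lv (Lf t)) (inner lv x0) \<le> inner lv y" by (rule seg_inner(1))
          moreover have "\<phi> t > 0" using pos t by blast
          ultimately show False using Klt[OF y(1)] by (simp add: \<phi>_def min_def split: if_splits)
        qed
        then have "y \<in> closed_segment x0 (R t)" using y(2) Un_closed_segment[OF x0seg[OF t]] by blast
        then show "\<exists>y\<in>interior (convex hull \<Omega>I). y \<in> closed_segment (avg {0..1} \<psi>) (avg {t..1} \<psi>)"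
          using y(1) Ravg[of t] t by (auto simp: K_def C_def x0_def)
      qed
    next
      case npos: False
      then obtain t1 where t1: "t1 \<in> {0<..<1}" "\<phi> t1 < 0" using noZ by force
      show False
      proof (cases "\<forall>t\<in>{0<..<1}. \<phi> t < 0")
        case neg2: True
        let ?\<psi>' = "\<lambda>s. \<psi> (1 - s)"
        have psiA': "?\<psi>' \<in> A_class \<Omega>O \<Omega>I" by (rule A_refl[OF psiA])
        have avg01: "avg {0..1} ?\<psi>' = x0" using refl_avg[OF psi01, of 0 1] by (simp add: x0_def)
        show False
        proof (rule core[OF SA psiA'])
          show "avg {0..1} ?\<psi>' \<notin> interior (convex hull \<Omega>I)" using avg01 x0K by (simp add: x0_def)
          fix t :: real assume t: "t \<in> {0<..<1}"
          define s where "s = 1 - t"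
          have s: "s \<in> {0<..<1}" using t by (auto simp: s_def)
          obtain y where y: "y \<in> K" "y \<in> closed_segment (Lf s) (R s)" using hitK[OF s] by blast
          have Rpos: "inner lv (R s) - inner lv x0 > 0"
          proof -
            have "\<phi> s < 0" using neg2 s by blast
            moreover have "s > 0" using s by simp
            ultimately have "s * \<phi> s < 0" by (simp add: mult_pos_neg)
            then have "(1 - s) * (inner lv (R s) - inner lv x0) > 0" using signrel[OF s] by simp
            then show ?thesis using s by (simp add: zero_less_mult_iff)
          qed
          have "y \<notin> closed_segment x0 (R s)"
          proof
            assume "y \<in> closed_segment x0 (R s)"
            then have "min (inner lv x0) (inner lv (R s)) \<le> inner lv y" by (rule seg_inner(1))
            then show False using Klt[OF y(1)] Rpos by (simp add: min_def split: if_splits)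
          qed
          then have "y \<in> closed_segment (Lf s) x0" using y(2) Un_closed_segment[OF x0seg[OF s]] by blast
          then have "y \<in> closed_segment x0 (Lf s)" by (simp add: closed_segment_commute)
          moreover have "avg {t..1} ?\<psi>' = Lf s"
            using refl_avg[OF psi01, of t 1] t Lavg[of s] s by (simp add: s_def)
          ultimately show "\<exists>y\<in>interior (convex hull \<Omega>I). y \<in> closed_segment (avg {0..1} ?\<psi>') (avg {t..1} ?\<psi>')"
            using y(1) avg01 by (auto simp: K_def C_def)
        qed
      next
        case False
        then obtain t2 where t2: "t2 \<in> {0<..<1}" "\<phi> t2 \<ge> 0" by force
        have sub: "{min t1 t2..max t1 t2} \<subseteq> {0<..<1}" using t1 t2 by auto
        have cc: "continuous_on {min t1 t2..max t1 t2} \<phi>" by (rule continuous_on_subset[OF \<phi>c sub])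
        obtain z where z: "min t1 t2 \<le> z" "z \<le> max t1 t2" "\<phi> z = 0"
        proof (cases "t1 \<le> t2")
          case True
          then show ?thesis using IVT'[of \<phi> t1 0 t2] cc t1 t2 that by auto
        next
          case False
          then show ?thesis using IVT2'[of \<phi> t1 0 t2] cc t1 t2 that by auto
        qed
        then have "z \<in> {0<..<1}" using sub by auto
        then show False using noZ z by blast
      qed
    qed
  qed
qed


end
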